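(* Let $L=2U\oplus L_0$ be an even lattice of signature $(2,n)$, $n\ge3$, such that every isotropic subgroup of the discriminant group $(A_L,q_L)$ is cyclic. Then the closure in the Baily–Borel compactification $\mathcal F_L^*$ of every $1$-dimensional cusp contains the standard $0$-dimensional cusp.
   Context: $U$ is the hyperbolic plane; $A_L=L^\vee/L$ with discriminant quadratic form $q_L\colon A_L\to\mathbb Q/2\mathbb Z$; a subgroup $H\subset A_L$ is isotropic if $q_L|_H=0$. $\mathcal D_L$ is one of the two components of $\{[w]\in\mathbb P(L\otimes\mathbb C)\mid (w,w)=0,(w,\bar w)>0\}$, $\widetilde{\mathrm O}^+(L)$ is the subgroup of $\mathrm O(L)$ preserving $\mathcal D_L$ and acting trivially on $A_L$, and $\mathcal F_L=\widetilde{\mathrm O}^+(L)\backslash\mathcal D_L$. The $0$-dimensional cusps of $\mathcal F_L^*$ correspond to $\widetilde{\mathrm O}^+(L)$-orbits of primitive isotropic vectors of $L$, and the $1$-dimensional cusps to orbits of primitive totally isotropic rank-$2$ sublattices $E\subset L$; the closure of the $1$-dimensional cusp of $E$ contains the $0$-dimensional cusps of the primitive isotropic vectors lying in $E$. All primitive isotropic vectors $v$ with $\mathrm{div}(v)=1$ (where $\mathrm{div}(v)\mathbb Z=(v,L)$) form a single orbit; the corresponding cusp is called the standard $0$-dimensional cusp. *)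

theory Defs
  imports Main "HOL.Rat"
begin

text \<open>Lattice L = 2U + L0 realised as the integral points of Q^(n+2) (vectors with
  support in {0..<n+2}); coordinates 0,1 and 2,3 span the two copies of U, coordinates
  4..n+1 span L0, whose Gram matrix is G (an (n-2)x(n-2) integer matrix).\<close>

type_synonym qvec = "nat \<Rightarrow> rat"

definition supp_in :: "nat \<Rightarrow> qvec \<Rightarrow> bool" where
  "supp_in N x \<longleftrightarrow> (\<forall>i\<ge>N. x i = 0)"

definition lat :: "nat \<Rightarrow> qvec set" where
  "lat n = {x. supp_in (n + 2) x \<and> (\<forall>i. x i \<in> \<int>)}"

definition bilL :: "nat \<Rightarrow> (nat \<Rightarrow> nat \<Rightarrow> int) \<Rightarrow> qvec \<Rightarrow> qvec \<Rightarrow> rat" where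
  "bilL n G x y = x 0 * y 1 + x 1 * y 0 + x 2 * y 3 + x 3 * y 2
     + (\<Sum>i<n-2. \<Sum>j<n-2. x (4+i) * of_int (G i j) * y (4+j))"

text \<open>L0 is an even lattice; since 2U has signature (2,2), signature (2,n) of L
  means L0 is negative definite of rank n-2.\<close>
definition even_neg_def_gram :: "nat \<Rightarrow> (nat \<Rightarrow> nat \<Rightarrow> int) \<Rightarrow> bool" where
  "even_neg_def_gram m G \<longleftrightarrow>
     (\<forall>i<m. \<forall>j<m. G i j = G j i) \<and> (\<forall>i<m. even (G i i)) \<and>
     (\<forall>x::nat\<Rightarrow>int. (\<exists>i<m. x i \<noteq> 0) \<longrightarrow> (\<Sum>i<m. \<Sum>j<m. x i * G i j * x j) < 0)"

definition dual_lat :: "nat \<Rightarrow> (nat \<Rightarrow> nat \<Rightarrow> int) \<Rightarrow> qvec set" where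
  "dual_lat n G = {x. supp_in (n + 2) x \<and> (\<forall>y\<in>lat n. bilL n G x y \<in> \<int>)}"

text \<open>Subgroups H of A_L = L^dual / L correspond to additive subgroups H' with
  L \<subseteq> H' \<subseteq> L^dual; H is isotropic iff q_L(x) = (x,x) mod 2Z vanishes on H',
  and H is cyclic iff H' = Z g + L for some g.\<close>
definition isotropic_subgroups_cyclic :: "nat \<Rightarrow> (nat \<Rightarrow> nat \<Rightarrow> int) \<Rightarrow> bool" where
  "isotropic_subgroups_cyclic n G \<longleftrightarrow>
    (\<forall>H. lat n \<subseteq> H \<and> H \<subseteq> dual_lat n G \<and>
         (\<forall>x\<in>H. \<forall>y\<in>H. (\<lambda>i. x i - y i) \<in> H) \<and>
         (\<forall>x\<in>H. \<exists>k::int. bilL n G x x = 2 * of_int k)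
       \<longrightarrow> (\<exists>g\<in>H. H = {(\<lambda>i. of_int k * g i + l i) | k l. k \<in> (UNIV::int set) \<and> l \<in> lat n}))"

definition primitive_vec :: "nat \<Rightarrow> qvec \<Rightarrow> bool" where
  "primitive_vec n v \<longleftrightarrow> v \<in> lat n \<and> v \<noteq> (\<lambda>_. 0) \<and>
     (\<forall>w\<in>lat n. \<forall>k::int. v = (\<lambda>i. of_int k * w i) \<longrightarrow> k = 1 \<or> k = -1)"

definition primitive_isotropic :: "nat \<Rightarrow> (nat \<Rightarrow> nat \<Rightarrow> int) \<Rightarrow> qvec \<Rightarrow> bool" where
  "primitive_isotropic n G v \<longleftrightarrow> primitive_vec n v \<and> bilL n G v v = 0"

definition lat_div :: "nat \<Rightarrow> (nat \<Rightarrow> nat \<Rightarrow> int) \<Rightarrow> qvec \<Rightarrow> int" where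
  "lat_div n G v = Gcd {k::int. \<exists>w\<in>lat n. bilL n G v w = of_int k}"

definition span2 :: "qvec \<Rightarrow> qvec \<Rightarrow> qvec set" where
  "span2 e1 e2 = {(\<lambda>i. of_int a * e1 i + of_int b * e2 i) | a b. a \<in> (UNIV::int set) \<and> b \<in> (UNIV::int set)}"

definition prim_tot_iso_rank2 :: "nat \<Rightarrow> (nat \<Rightarrow> nat \<Rightarrow> int) \<Rightarrow> qvec set \<Rightarrow> bool" where
  "prim_tot_iso_rank2 n G E \<longleftrightarrow>
    (\<exists>e1 e2. e1 \<in> lat n \<and> e2 \<in> lat n \<and> E = span2 e1 e2 \<and>
       (\<forall>a b::int. (\<lambda>i. of_int a * e1 i + of_int b * e2 i) = (\<lambda>_. 0) \<longrightarrow> a = 0 \<and> b = 0) \<and>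
       bilL n G e1 e1 = 0 \<and> bilL n G e1 e2 = 0 \<and> bilL n G e2 e2 = 0 \<and>
       (\<forall>w\<in>lat n. \<forall>k::int. k \<noteq> 0 \<longrightarrow> (\<lambda>i. of_int k * w i) \<in> E \<longrightarrow> w \<in> E))"

end

theory Submission
  imports Defs
begin

lemma quad_even:
  fixes x :: "nat \<Rightarrow> int"
  assumes "\<forall>i<m. \<forall>j<m. G i j = G j i" "\<forall>i<m. even (G i i)"
  shows "even (\<Sum>i<m. \<Sum>j<m. x i * G i j * x j)"
  using assms
proof (induction m)
  case 0 then show ?case by simp
next
  case (Suc m)
  have IH: "even (\<Sum>i<m. \<Sum>j<m. x i * G i j * x j)" using Suc by auto
  have s: "(\<Sum>j<m. x m * G m j * x j) = (\<Sum>j<m. x j * G j m * x m)"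
    using Suc.prems(1) by (intro sum.cong) auto
  have "(\<Sum>i<Suc m. \<Sum>j<Suc m. x i * G i j * x j) =
     (\<Sum>i<m. \<Sum>j<m. x i * G i j * x j) + (\<Sum>i<m. x i * G i m * x m) + (\<Sum>j<m. x m * G m j * x j) + x m * G m m * x m"
    by (simp add: sum.distrib)
  also have "\<dots> = (\<Sum>i<m. \<Sum>j<m. x i * G i j * x j) + 2 * (\<Sum>j<m. x j * G j m * x m) + x m * G m m * x m"
    using s by simp
  finally have "(\<Sum>i<Suc m. \<Sum>j<Suc m. x i * G i j * x j) =
     (\<Sum>i<m. \<Sum>j<m. x i * G i j * x j) + 2 * (\<Sum>j<m. x j * G j m * x m) + x m * G m m * x m" .
  moreover have "even (x m * G m m * x m)" using Suc.prems(2) by auto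
  ultimately show ?case using IH by (simp only: even_add even_mult_iff even_numeral simp_thms)
qed

lemma bil_lin_left:
  "bilL n G (\<lambda>i. a * x i + b * y i) z = a * bilL n G x z + b * bilL n G y z"
  unfolding bilL_def
  by (simp add: algebra_simps sum.distrib sum_distrib_left)

lemma bil_lin_right:
  "bilL n G z (\<lambda>i. a * x i + b * y i) = a * bilL n G z x + b * bilL n G z y"
  unfolding bilL_def
  by (simp add: algebra_simps sum.distrib sum_distrib_left)

lemma bil_sym:
  assumes "\<forall>i<n-2. \<forall>j<n-2. G i j = G j i"
  shows "bilL n G x y = bilL n G y x"
proof -
  have "(\<Sum>i<n-2. \<Sum>j<n-2. x (4+i) * of_int (G i j) * y (4+j)) =
        (\<Sum>j<n-2. \<Sum>i<n-2. x (4+i) * of_int (G i j) * y (4+j))"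
    by (rule sum.swap)
  also have "\<dots> = (\<Sum>i<n-2. \<Sum>j<n-2. y (4+i) * of_int (G i j) * x (4+j))"
    using assms by (intro sum.cong refl) (simp add: mult_ac)
  finally show ?thesis unfolding bilL_def by (simp add: algebra_simps)
qed

lemma bil_int:
  assumes "x \<in> lat n" "y \<in> lat n"
  shows "bilL n G x y \<in> \<int>"
  using assms unfolding bilL_def lat_def
  by (auto intro!: Ints_add Ints_mult Ints_sum)

lemma flo: "(q::rat) \<in> \<int> \<Longrightarrow> of_int \<lfloor>q\<rfloor> = q"
  by (metis Ints_cases floor_of_int)

lemma bil_even:
  assumes "x \<in> lat n" "\<forall>i<n-2. \<forall>j<n-2. G i j = G j i" "\<forall>i<n-2. even (G i i)"
  shows "\<exists>k::int. bilL n G x x = 2 * of_int k"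
proof -
  define z where "z = (\<lambda>i. \<lfloor>x i\<rfloor>)"
  have xz: "x i = of_int (z i)" for i using assms(1) unfolding lat_def z_def by (simp add: flo)
  have "even (\<Sum>i<n-2. \<Sum>j<n-2. z (4+i) * G i j * z (4+j))"
    using quad_even[OF assms(2,3), of "\<lambda>i. z (4+i)"] by simp
  then obtain t where t: "(\<Sum>i<n-2. \<Sum>j<n-2. z (4+i) * G i j * z (4+j)) = 2 * t" by blast
  have "bilL n G x x = of_int (2 * (z 0 * z 1 + z 2 * z 3) + (\<Sum>i<n-2. \<Sum>j<n-2. z (4+i) * G i j * z (4+j)))"
    unfolding bilL_def xz by (simp add: algebra_simps)
  then show ?thesis using t by (intro exI[of _ "z 0 * z 1 + z 2 * z 3 + t"]) simp
qed


lemma rat_clear: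
  fixes a b :: rat
  obtains K :: int where "K > 0" "a * of_int K \<in> \<int>" "b * of_int K \<in> \<int>"
proof -
  obtain an ad where qa: "quotient_of a = (an, ad)" by (cases "quotient_of a")
  obtain bn bd where qb: "quotient_of b = (bn, bd)" by (cases "quotient_of b")
  have pa: "ad > 0" "a = of_int an / of_int ad" using qa quotient_of_denom_pos quotient_of_div by auto
  have pb: "bd > 0" "b = of_int bn / of_int bd" using qb quotient_of_denom_pos quotient_of_div by auto
  have "a * of_int (ad * bd) = of_int (an * bd)" using pa by (simp add: field_simps)
  moreover have "b * of_int (ad * bd) = of_int (bn * ad)" using pb by (simp add: field_simps)
  ultimately show ?thesis using pa pb by (intro that[of "ad * bd"]) auto
qed

lemma int_of: "(q::rat) \<in> \<int> \<Longrightarrow> \<exists>z. q = of_int z"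
  by (metis Ints_cases)

lemma indep_rat:
  assumes ind: "\<forall>a b::int. (\<lambda>i. of_int a * e1 i + of_int b * e2 i) = (\<lambda>_. 0) \<longrightarrow> a = 0 \<and> b = 0"
    and eq: "(\<lambda>i. x * e1 i + y * (e2 i::rat)) = (\<lambda>_. 0)"
  shows "x = 0 \<and> y = 0"
proof -
  obtain K where K: "K > 0" "x * of_int K \<in> \<int>" "y * of_int K \<in> \<int>" by (rule rat_clear)
  obtain a b where ab: "x * of_int K = of_int a" "y * of_int K = of_int b" using K int_of by blast
  have "(\<lambda>i. of_int a * e1 i + of_int b * e2 i) = (\<lambda>_. 0)"
  proof
    fix i
    have "x * e1 i + y * e2 i = 0" using eq by metis
    then have "of_int K * (x * e1 i + y * e2 i) = 0" by simp
    then show "of_int a * e1 i + of_int b * e2 i = 0" using ab by (simp add: algebra_simps ab[symmetric])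
  qed
  then have "a = 0" "b = 0" using ind by auto
  then show ?thesis using ab K by auto
qed

lemma comb_in_E:
  assumes prim: "\<forall>w\<in>lat n. \<forall>k::int. k \<noteq> 0 \<longrightarrow> (\<lambda>i. of_int k * w i) \<in> span2 e1 e2 \<longrightarrow> w \<in> span2 e1 e2"
    and w: "w \<in> lat n" "w = (\<lambda>i. x * e1 i + y * e2 i)"
  shows "\<exists>p q::int. w = (\<lambda>i. of_int p * e1 i + of_int q * e2 i)"
proof -
  obtain K where K: "K > 0" "x * of_int K \<in> \<int>" "y * of_int K \<in> \<int>" by (rule rat_clear)
  obtain a b where ab: "x * of_int K = of_int a" "y * of_int K = of_int b" using K int_of by blast
  have "(\<lambda>i. of_int K * w i) = (\<lambda>i. of_int a * e1 i + of_int b * e2 i)"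
    using w(2) by (auto simp: algebra_simps ab[symmetric])
  then have "(\<lambda>i. of_int K * w i) \<in> span2 e1 e2" unfolding span2_def by blast
  moreover have "K \<noteq> 0" using K(1) by simp
  ultimately have "w \<in> span2 e1 e2" using prim w(1) by blast
  then show ?thesis unfolding span2_def by blast
qed


lemma bil_add_left: "bilL n G (\<lambda>i. x i + y i) z = bilL n G x z + bilL n G y z"
  unfolding bilL_def by (simp add: algebra_simps sum.distrib)
lemma bil_diff_left: "bilL n G (\<lambda>i. x i - y i) z = bilL n G x z - bilL n G y z"
  unfolding bilL_def by (simp add: algebra_simps sum_subtractf)
lemma bil_scale_left: "bilL n G (\<lambda>i. a * x i) z = a * bilL n G x z"
  unfolding bilL_def by (simp add: algebra_simps sum_distrib_left)
lemma bil_add_right: "bilL n G z (\<lambda>i. x i + y i) = bilL n G z x + bilL n G z y"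
  unfolding bilL_def by (simp add: algebra_simps sum.distrib)
lemma bil_zero_left: "bilL n G (\<lambda>_. 0) z = 0"
  unfolding bilL_def by simp

lemma coprime_kernel:
  fixes \<alpha> \<beta> :: rat
  obtains r s :: int where "coprime r s" "of_int r * \<alpha> + of_int s * \<beta> = 0"
proof (cases "\<alpha> = 0")
  case True
  then show ?thesis by (intro that[of 1 0]) auto
next
  case False
  obtain p q where pq: "quotient_of (\<beta> / \<alpha>) = (p, q)" by (cases "quotient_of (\<beta> / \<alpha>)")
  have q: "q > 0" "\<beta> / \<alpha> = of_int p / of_int q" "coprime p q"
    using pq quotient_of_denom_pos quotient_of_div quotient_of_coprime by auto
  have "\<beta> = of_int p / of_int q * \<alpha>" using q(2) False by (simp add: field_simps)
  then have "of_int p * \<alpha> + of_int (-q) * \<beta> = 0" using q(1) by (simp add: field_simps)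
  then show ?thesis using q(3) by (intro that[of p "-q"]) auto
qed


theorem lemma5p1:
  fixes n :: nat and G :: "nat \<Rightarrow> nat \<Rightarrow> int" and E :: "qvec set"
  assumes "n \<ge> 3"
    and "even_neg_def_gram (n - 2) G"
    and "isotropic_subgroups_cyclic n G"
    and "prim_tot_iso_rank2 n G E"
  shows "\<exists>v\<in>E. primitive_isotropic n G v \<and> lat_div n G v = 1"
proof -
  obtain e1 e2 where e1: "e1 \<in> lat n" and e2: "e2 \<in> lat n" and Edef: "E = span2 e1 e2"
    and ind: "\<forall>a b::int. (\<lambda>i. of_int a * e1 i + of_int b * e2 i) = (\<lambda>_. 0) \<longrightarrow> a = 0 \<and> b = 0"
    and i11: "bilL n G e1 e1 = 0" and i12: "bilL n G e1 e2 = 0" and i22: "bilL n G e2 e2 = 0"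
    and prim: "\<forall>w\<in>lat n. \<forall>k::int. k \<noteq> 0 \<longrightarrow> (\<lambda>i. of_int k * w i) \<in> span2 e1 e2 \<longrightarrow> w \<in> span2 e1 e2"
    using assms(4) unfolding prim_tot_iso_rank2_def by blast
  have symG: "\<forall>i<n-2. \<forall>j<n-2. G i j = G j i" and evG: "\<forall>i<n-2. even (G i i)"
    using assms(2) unfolding even_neg_def_gram_def by auto
  have i21: "bilL n G e2 e1 = 0" using i12 bil_sym[OF symG] by metis
  have isoEQ: "bilL n G (\<lambda>i. a * e1 i + b * e2 i) (\<lambda>i. c * e1 i + d * e2 i) = 0" for a b c d
    by (simp add: bil_lin_left bil_lin_right i11 i12 i21 i22)
  have suppEQ: "supp_in (n+2) (\<lambda>i. a * e1 i + b * e2 i)" for a b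
    using e1 e2 unfolding lat_def supp_in_def by auto
  have latsub: "(\<lambda>i. x i - y i) \<in> lat n" if "x \<in> lat n" "y \<in> lat n" for x y
    using that unfolding lat_def supp_in_def by auto
  have latlin: "(\<lambda>i. of_int a * x i + y i) \<in> lat n" if "x \<in> lat n" "y \<in> lat n" for x y a
    using that unfolding lat_def supp_in_def by auto
  have lat0: "(\<lambda>_. 0) \<in> lat n" unfolding lat_def supp_in_def by auto
  define H where "H = {w. \<exists>a b u l. u = (\<lambda>i. a * e1 i + b * e2 i) \<and> u \<in> dual_lat n G
        \<and> l \<in> lat n \<and> w = (\<lambda>i. u i + l i)}"
  have dual0: "(\<lambda>_. 0) \<in> dual_lat n G"
    unfolding dual_lat_def supp_in_def by (simp add: bil_zero_left)
  have H1: "lat n \<subseteq> H"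
  proof
    fix l assume l: "l \<in> lat n"
    have "(\<lambda>i. 0 * e1 i + 0 * e2 i) = (\<lambda>_. 0::rat)" by simp
    then show "l \<in> H" unfolding H_def using l dual0
      by (intro CollectI exI[of _ 0] exI[of _ "\<lambda>_. 0"] exI[of _ l]) auto
  qed
  have H2: "H \<subseteq> dual_lat n G"
  proof
    fix w assume "w \<in> H"
    then obtain a b u l where u: "u = (\<lambda>i. a * e1 i + b * e2 i)" "u \<in> dual_lat n G"
      and l: "l \<in> lat n" and w: "w = (\<lambda>i. u i + l i)" unfolding H_def by blast
    have "supp_in (n+2) w" using u(2) l unfolding w dual_lat_def lat_def supp_in_def by auto
    moreover have "bilL n G w y \<in> \<int>" if "y \<in> lat n" for y
      using u(2) bil_int[OF l that] that unfolding w bil_add_left dual_lat_def by auto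
    ultimately show "w \<in> dual_lat n G" unfolding dual_lat_def by auto
  qed
  have H3: "\<forall>x\<in>H. \<forall>y\<in>H. (\<lambda>i. x i - y i) \<in> H"
  proof (intro ballI)
    fix x y assume "x \<in> H" "y \<in> H"
    then obtain a b u l a' b' u' l' where u: "u = (\<lambda>i. a * e1 i + b * e2 i)" "u \<in> dual_lat n G"
      and l: "l \<in> lat n" and x: "x = (\<lambda>i. u i + l i)"
      and u': "u' = (\<lambda>i. a' * e1 i + b' * e2 i)" "u' \<in> dual_lat n G"
      and l': "l' \<in> lat n" and y: "y = (\<lambda>i. u' i + l' i)" unfolding H_def by blast
    have "(\<lambda>i. u i - u' i) \<in> dual_lat n G"
      using u(2) u'(2) unfolding dual_lat_def supp_in_def by (auto simp: bil_diff_left)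
    moreover have "(\<lambda>i. u i - u' i) = (\<lambda>i. (a - a') * e1 i + (b - b') * e2 i)"
      unfolding u u' by (auto simp: algebra_simps)
    moreover have "(\<lambda>i. x i - y i) = (\<lambda>i. (u i - u' i) + (l i - l' i))"
      unfolding x y by (auto simp: algebra_simps)
    ultimately show "(\<lambda>i. x i - y i) \<in> H" unfolding H_def using latsub[OF l l'] by blast
  qed
  have H4: "\<forall>x\<in>H. \<exists>k::int. bilL n G x x = 2 * of_int k"
  proof
    fix x assume "x \<in> H"
    then obtain a b u l where u: "u = (\<lambda>i. a * e1 i + b * e2 i)" "u \<in> dual_lat n G"
      and l: "l \<in> lat n" and x: "x = (\<lambda>i. u i + l i)" unfolding H_def by blast
    have uu: "bilL n G u u = 0" unfolding u(1) by (rule isoEQ)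
    have "bilL n G u l \<in> \<int>" using u(2) l unfolding dual_lat_def by auto
    then obtain t where t: "bilL n G u l = of_int t" using int_of by blast
    obtain k where k: "bilL n G l l = 2 * of_int k" using bil_even[OF l symG evG] by blast
    have "bilL n G x x = bilL n G u u + bilL n G u l + bilL n G l u + bilL n G l l"
      unfolding x bil_add_left bil_add_right by simp
    also have "\<dots> = 2 * of_int (t + k)"
      using uu t k bil_sym[OF symG, of l u] by simp
    finally show "\<exists>k::int. bilL n G x x = 2 * of_int k" by blast
  qed
  obtain g where gH: "g \<in> H" and Hg: "H = {(\<lambda>i. of_int k * g i + l i) | k l. k \<in> (UNIV::int set) \<and> l \<in> lat n}"
  proof -
    have cyc: "lat n \<subseteq> H \<and> H \<subseteq> dual_lat n G \<and>
         (\<forall>x\<in>H. \<forall>y\<in>H. (\<lambda>i. x i - y i) \<in> H) \<and>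
         (\<forall>x\<in>H. \<exists>k::int. bilL n G x x = 2 * of_int k)
       \<longrightarrow> (\<exists>g\<in>H. H = {(\<lambda>i. of_int k * g i + l i) | k l. k \<in> (UNIV::int set) \<and> l \<in> lat n})"
      using assms(3) unfolding isotropic_subgroups_cyclic_def by (rule spec)
    have "\<exists>g\<in>H. H = {(\<lambda>i. of_int k * g i + l i) | k l. k \<in> (UNIV::int set) \<and> l \<in> lat n}"
      by (rule cyc[THEN mp, OF conjI[OF H1 conjI[OF H2 conjI[OF H3 H4]]]])
    then show ?thesis using that by blast
  qed
  obtain \<alpha> \<beta> u1 l1 where u1: "u1 = (\<lambda>i. \<alpha> * e1 i + \<beta> * e2 i)"
      and l1: "l1 \<in> lat n" and g: "g = (\<lambda>i. u1 i + l1 i)" using gH unfolding H_def by blast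
  obtain r s where rs: "coprime r s" "of_int r * \<alpha> + of_int s * \<beta> = 0" by (rule coprime_kernel)
  obtain c d where cd: "c * r + d * s = 1" using bezout_int[of r s] rs(1) by auto
  define v where "v = (\<lambda>i. of_int c * e1 i + of_int d * e2 i)"
  have vE: "v \<in> E" unfolding Edef span2_def v_def by blast
  have vlat: "v \<in> lat n" using e1 e2 unfolding v_def lat_def supp_in_def by auto
  define S where "S = {k::int. \<exists>w\<in>lat n. bilL n G v w = of_int k}"
  have core: "k = 1 \<or> k = -1" if k0: "k \<noteq> 0" and kdvd: "\<forall>z\<in>S. k dvd z" for k
  proof -
    define vk where "vk = (\<lambda>i. (of_int c / of_int k) * e1 i + (of_int d / of_int k) * e2 i)"
    have vk2: "vk = (\<lambda>i. (1 / of_int k) * v i)" unfolding vk_def v_def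
      by (rule ext) (simp add: add_divide_distrib)
    have "bilL n G vk y \<in> \<int>" if y: "y \<in> lat n" for y
    proof -
      obtain z where z: "bilL n G v y = of_int z" using bil_int[OF vlat y] int_of by blast
      then have "z \<in> S" unfolding S_def using y by auto
      then obtain t where "z = k * t" using kdvd by blast
      then have "bilL n G vk y = of_int t" unfolding vk2 bil_scale_left z using k0 by simp
      then show ?thesis by simp
    qed
    moreover have "supp_in (n+2) vk" unfolding vk_def by (rule suppEQ)
    ultimately have vkd: "vk \<in> dual_lat n G" unfolding dual_lat_def by blast
    have "\<exists>a b u l. u = (\<lambda>i. a * e1 i + b * e2 i) \<and> u \<in> dual_lat n G
        \<and> l \<in> lat n \<and> vk = (\<lambda>i. u i + l i)"
      apply (rule exI[of _ "of_int c / of_int k"], rule exI[of _ "of_int d / of_int k"],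
          rule exI[of _ vk], rule exI[of _ "\<lambda>_. 0"])
      by (intro conjI vkd lat0) (simp_all add: vk_def)
    then have "vk \<in> H" unfolding H_def by blast
    then obtain m l where l: "l \<in> lat n" and vkm: "vk = (\<lambda>i. of_int m * g i + l i)"
      unfolding Hg by blast
    define w where "w = (\<lambda>i. of_int m * l1 i + l i)"
    have wlat: "w \<in> lat n" unfolding w_def by (rule latlin[OF l1 l])
    have w2: "w = (\<lambda>i. (of_int c / of_int k - of_int m * \<alpha>) * e1 i + (of_int d / of_int k - of_int m * \<beta>) * e2 i)"
    proof
      fix i
      have "vk i = of_int m * g i + l i" using vkm by metis
      then show "w i = (of_int c / of_int k - of_int m * \<alpha>) * e1 i + (of_int d / of_int k - of_int m * \<beta>) * e2 i"
        unfolding w_def g u1 vk_def by (simp add: algebra_simps)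
    qed
    obtain p q where pq: "w = (\<lambda>i. of_int p * e1 i + of_int q * e2 i)"
      using comb_in_E[OF prim wlat w2] by blast
    have "(\<lambda>i. (of_int c / of_int k - of_int m * \<alpha> - of_int p) * e1 i + (of_int d / of_int k - of_int m * \<beta> - of_int q) * e2 i) = (\<lambda>_. 0)"
    proof
      fix i
      have "w i = w i" by simp
      then have "(of_int c / of_int k - of_int m * \<alpha>) * e1 i + (of_int d / of_int k - of_int m * \<beta>) * e2 i = of_int p * e1 i + of_int q * e2 i"
        using w2 pq by metis
      then show "(of_int c / of_int k - of_int m * \<alpha> - of_int p) * e1 i + (of_int d / of_int k - of_int m * \<beta> - of_int q) * e2 i = 0"
        by (simp add: algebra_simps)
    qed
    then have "of_int c / of_int k - of_int m * \<alpha> - of_int p = 0 \<and> of_int d / of_int k - of_int m * \<beta> - of_int q = 0"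
      by (rule indep_rat[OF ind])
    then have eqs: "of_int c / of_int k = of_int m * \<alpha> + of_int p" "of_int d / of_int k = of_int m * \<beta> + of_int q"
      by simp_all
    have "(1::rat) / of_int k = of_int (c * r + d * s) / of_int k" using cd by simp
    also have "\<dots> = of_int r * (of_int c / of_int k) + of_int s * (of_int d / of_int k)"
      by (simp add: add_divide_distrib mult_ac)
    also have "\<dots> = of_int m * (of_int r * \<alpha> + of_int s * \<beta>) + of_int (r * p + s * q)"
      unfolding eqs by (simp add: algebra_simps)
    also have "\<dots> = of_int (r * p + s * q)" using rs(2) by simp
    finally have "(1::rat) = of_int k * of_int (r * p + s * q)" using k0 by (simp add: field_simps)
    then have "k * (r * p + s * q) = 1" by (metis of_int_eq_1_iff of_int_mult)
    then show ?thesis using zmult_eq_1_iff by blast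
  qed
  have not_all2: "\<not> (\<forall>z\<in>S. (2::int) dvd z)" using core[of 2] by auto
  have D: "Gcd S = 1"
  proof -
    have "Gcd S \<noteq> 0"
    proof
      assume "Gcd S = 0"
      then have "S \<subseteq> {0}" by (simp add: Gcd_0_iff)
      then show False using not_all2 by auto
    qed
    moreover have "\<forall>z\<in>S. Gcd S dvd z" by (simp add: Gcd_dvd)
    ultimately have "Gcd S = 1 \<or> Gcd S = -1" using core by blast
    moreover have "Gcd S \<ge> 0" by simp
    ultimately show ?thesis by auto
  qed
  have vnz: "v \<noteq> (\<lambda>_. 0)"
  proof
    assume "v = (\<lambda>_. 0)"
    then have "\<forall>z\<in>S. (2::int) dvd z" unfolding S_def by (auto simp: bil_zero_left)
    then show False using not_all2 by blast
  qed
  have primv: "primitive_vec n v" unfolding primitive_vec_def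
  proof (intro conjI ballI allI impI vlat vnz)
    fix w k assume w: "w \<in> lat n" and vw: "v = (\<lambda>i. of_int k * w i)"
    have kz: "k \<noteq> 0" using vw vnz by auto
    have "\<forall>z\<in>S. k dvd z"
    proof
      fix z assume "z \<in> S"
      then obtain y where y: "y \<in> lat n" "bilL n G v y = of_int z" unfolding S_def by blast
      obtain t where t: "bilL n G w y = of_int t" using bil_int[OF w y(1)] int_of by blast
      have "of_int z = (of_int (k * t) :: rat)" using y(2) t unfolding vw bil_scale_left by simp
      then have "z = k * t" by (metis of_int_eq_iff)
      then show "k dvd z" by simp
    qed
    then show "k = 1 \<or> k = -1" using core kz by blast
  qed
  have "bilL n G v v = 0" unfolding v_def by (rule isoEQ)
  then have "primitive_isotropic n G v" using primv unfolding primitive_isotropic_def by simp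
  moreover have "lat_div n G v = 1" unfolding lat_div_def using D unfolding S_def by simp
  ultimately show ?thesis using vE by blast
qed

end
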